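(* Consider a complete 4-node network with nodes $A,B,C,D$, where for each ordered pair of distinct nodes $(X,Y)$ the directed link $XY$ has capacity $XY>0$. Define \[ I^*=\min\{BA+CA,BA+DA,CA+DA,AB+CB,AB+DB,CB+DB,AC+BC,AC+DC,BC+DC,AD+BD,AD+CD,BD+CD\}, \] i.e., the minimum, over all nodes, of the sum of the capacities of any two distinct incoming links to that node. For an unordered pair $\{X,Y\}$ write $\widehat{XY}=XY+YX$. Then for any positive value $R<I^*$, at least three of $\widehat{AB},\widehat{AC},\widehat{AD},\widehat{BC},\widehat{BD},\widehat{CD}$ are strictly greater than $R$.
   Context: Here $XY$ denotes the capacity (maximum number of bits per unit time) of the directed link from node $X$ to node $Y$. *)

theory Defs
  imports Complex_Main
begin

datatype node = A | B | C | D

lemma UNIV_node: "(UNIV :: node set) = {A, B, C, D}"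
  using node.exhaust by auto

instance node :: finite
  by standard (simp add: UNIV_node)

definition Istar :: "(node \<Rightarrow> node \<Rightarrow> real) \<Rightarrow> real" where
  "Istar c = Min {c X Z + c Y Z | X Y Z. X \<noteq> Y \<and> X \<noteq> Z \<and> Y \<noteq> Z}"

definition bicap :: "(node \<Rightarrow> node \<Rightarrow> real) \<Rightarrow> node \<Rightarrow> node \<Rightarrow> real" where
  "bicap c X Y = c X Y + c Y X"

end

theory Submission
  imports Defs
begin

lemma three_sub:
  assumes "finite S" "{{P,Q}, {P',Q'}, {P'',Q''}} \<subseteq> S"
    and "card {{P,Q}, {P',Q'}, {P'',Q''}} = 3"
  shows "card S \<ge> 3"
  using card_mono[OF assms(1,2)] assms(3) by simp

theorem theorem2:
  fixes c :: "node \<Rightarrow> node \<Rightarrow> real" and R :: real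
  assumes pos: "\<And>X Y. X \<noteq> Y \<Longrightarrow> c X Y > 0"
    and R_pos: "R > 0"
    and R_lt: "R < Istar c"
  shows "card {{X, Y} | X Y. X \<noteq> Y \<and> bicap c X Y > R} \<ge> 3"
proof -
  let ?M = "{c X Z + c Y Z | X Y Z. X \<noteq> Y \<and> X \<noteq> Z \<and> Y \<noteq> Z}"
  have fin: "finite ?M"
  proof -
    have "?M \<subseteq> (\<lambda>(X,Y,Z). c X Z + c Y Z) ` UNIV" by (auto intro!: image_eqI[where x="(X,Y,Z)" for X Y Z])
    thus ?thesis by (rule finite_subset) simp
  qed
  have low: "\<And>X Y Z. X \<noteq> Y \<Longrightarrow> X \<noteq> Z \<Longrightarrow> Y \<noteq> Z \<Longrightarrow> c X Z + c Y Z > R"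
  proof -
    fix X Y Z :: node assume h: "X \<noteq> Y" "X \<noteq> Z" "Y \<noteq> Z"
    have "c X Z + c Y Z \<in> ?M" using h by blast
    hence "Min ?M \<le> c X Z + c Y Z" using fin by simp
    thus "c X Z + c Y Z > R" using R_lt unfolding Istar_def by simp
  qed
  have i0: "c B A + c C A > R" by (rule low) auto
  have i1: "c B A + c D A > R" by (rule low) auto
  have i2: "c C A + c D A > R" by (rule low) auto
  have i3: "c A B + c C B > R" by (rule low) auto
  have i4: "c A B + c D B > R" by (rule low) auto
  have i5: "c C B + c D B > R" by (rule low) auto
  have i6: "c A C + c B C > R" by (rule low) auto
  have i7: "c A C + c D C > R" by (rule low) auto
  have i8: "c B C + c D C > R" by (rule low) auto
  have i9: "c A D + c B D > R" by (rule low) auto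
  have i10: "c A D + c C D > R" by (rule low) auto
  have i11: "c B D + c C D > R" by (rule low) auto
  have disj: "(c A B + c B A > R \<and> c A C + c C A > R \<and> c A D + c D A > R) \<or> (c A B + c B A > R \<and> c A C + c C A > R \<and> c B C + c C B > R) \<or> (c A B + c B A > R \<and> c A C + c C A > R \<and> c B D + c D B > R) \<or> (c A B + c B A > R \<and> c A C + c C A > R \<and> c C D + c D C > R) \<or> (c A B + c B A > R \<and> c A D + c D A > R \<and> c B C + c C B > R) \<or> (c A B + c B A > R \<and> c A D + c D A > R \<and> c B D + c D B > R) \<or> (c A B + c B A > R \<and> c A D + c D A > R \<and> c C D + c D C > R) \<or> (c A B + c B A > R \<and> c B C + c C B > R \<and> c B D + c D B > R) \<or> (c A B + c B A > R \<and> c B C + c C B > R \<and> c C D + c D C > R) \<or> (c A B + c B A > R \<and> c B D + c D B > R \<and> c C D + c D C > R) \<or> (c A C + c C A > R \<and> c A D + c D A > R \<and> c B C + c C B > R) \<or> (c A C + c C A > R \<and> c A D + c D A > R \<and> c B D + c D B > R) \<or> (c A C + c C A > R \<and> c A D + c D A > R \<and> c C D + c D C > R) \<or> (c A C + c C A > R \<and> c B C + c C B > R \<and> c B D + c D B > R) \<or> (c A C + c C A > R \<and> c B C + c C B > R \<and> c C D + c D C > R) \<or> (c A C + c C A > R \<and> c B D + c D B > R \<and> c C D + c D C > R) \<or> (c A D + c D A > R \<and> c B C + c C B > R \<and> c B D + c D B > R) \<or> (c A D + c D A > R \<and> c B C + c C B > R \<and> c C D + c D C > R) \<or> (c A D +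 c D A > R \<and> c B D + c D B > R \<and> c C D + c D C > R) \<or> (c B C + c C B > R \<and> c B D + c D B > R \<and> c C D + c D C > R)"
    using i0 i1 i2 i3 i4 i5 i6 i7 i8 i9 i10 i11 by argo
  let ?S = "{{X, Y} | X Y. X \<noteq> Y \<and> bicap c X Y > R}"
  have finS: "finite ?S"
  proof -
    have "?S \<subseteq> Pow UNIV" by auto
    thus ?thesis by (rule finite_subset) simp
  qed
  show ?thesis
    using disj
  proof (elim disjE)
    assume h: "c A B + c B A > R \<and> c A C + c C A > R \<and> c A D + c D A > R"
    have "{{A,B}, {A,C}, {A,D}} \<subseteq> ?S" using h unfolding bicap_def by blast
    moreover have "card {{A,B}, {A,C}, {A,D}} = 3" by (simp add: doubleton_eq_iff)
    ultimately show ?thesis by (rule three_sub[OF finS])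
  next
    assume h: "c A B + c B A > R \<and> c A C + c C A > R \<and> c B C + c C B > R"
    have "{{A,B}, {A,C}, {B,C}} \<subseteq> ?S" using h unfolding bicap_def by blast
    moreover have "card {{A,B}, {A,C}, {B,C}} = 3" by (simp add: doubleton_eq_iff)
    ultimately show ?thesis by (rule three_sub[OF finS])
  next
    assume h: "c A B + c B A > R \<and> c A C + c C A > R \<and> c B D + c D B > R"
    have "{{A,B}, {A,C}, {B,D}} \<subseteq> ?S" using h unfolding bicap_def by blast
    moreover have "card {{A,B}, {A,C}, {B,D}} = 3" by (simp add: doubleton_eq_iff)
    ultimately show ?thesis by (rule three_sub[OF finS])
  next
    assume h: "c A B + c B A > R \<and> c A C + c C A > R \<and> c C D + c D C > R"
    have "{{A,B}, {A,C}, {C,D}} \<subseteq> ?S" using h unfolding bicap_def by blast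
    moreover have "card {{A,B}, {A,C}, {C,D}} = 3" by (simp add: doubleton_eq_iff)
    ultimately show ?thesis by (rule three_sub[OF finS])
  next
    assume h: "c A B + c B A > R \<and> c A D + c D A > R \<and> c B C + c C B > R"
    have "{{A,B}, {A,D}, {B,C}} \<subseteq> ?S" using h unfolding bicap_def by blast
    moreover have "card {{A,B}, {A,D}, {B,C}} = 3" by (simp add: doubleton_eq_iff)
    ultimately show ?thesis by (rule three_sub[OF finS])
  next
    assume h: "c A B + c B A > R \<and> c A D + c D A > R \<and> c B D + c D B > R"
    have "{{A,B}, {A,D}, {B,D}} \<subseteq> ?S" using h unfolding bicap_def by blast
    moreover have "card {{A,B}, {A,D}, {B,D}} = 3" by (simp add: doubleton_eq_iff)
    ultimately show ?thesis by (rule three_sub[OF finS])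
  next
    assume h: "c A B + c B A > R \<and> c A D + c D A > R \<and> c C D + c D C > R"
    have "{{A,B}, {A,D}, {C,D}} \<subseteq> ?S" using h unfolding bicap_def by blast
    moreover have "card {{A,B}, {A,D}, {C,D}} = 3" by (simp add: doubleton_eq_iff)
    ultimately show ?thesis by (rule three_sub[OF finS])
  next
    assume h: "c A B + c B A > R \<and> c B C + c C B > R \<and> c B D + c D B > R"
    have "{{A,B}, {B,C}, {B,D}} \<subseteq> ?S" using h unfolding bicap_def by blast
    moreover have "card {{A,B}, {B,C}, {B,D}} = 3" by (simp add: doubleton_eq_iff)
    ultimately show ?thesis by (rule three_sub[OF finS])
  next
    assume h: "c A B + c B A > R \<and> c B C + c C B > R \<and> c C D + c D C > R"
    have "{{A,B}, {B,C}, {C,D}} \<subseteq> ?S" using h unfolding bicap_def by blast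
    moreover have "card {{A,B}, {B,C}, {C,D}} = 3" by (simp add: doubleton_eq_iff)
    ultimately show ?thesis by (rule three_sub[OF finS])
  next
    assume h: "c A B + c B A > R \<and> c B D + c D B > R \<and> c C D + c D C > R"
    have "{{A,B}, {B,D}, {C,D}} \<subseteq> ?S" using h unfolding bicap_def by blast
    moreover have "card {{A,B}, {B,D}, {C,D}} = 3" by (simp add: doubleton_eq_iff)
    ultimately show ?thesis by (rule three_sub[OF finS])
  next
    assume h: "c A C + c C A > R \<and> c A D + c D A > R \<and> c B C + c C B > R"
    have "{{A,C}, {A,D}, {B,C}} \<subseteq> ?S" using h unfolding bicap_def by blast
    moreover have "card {{A,C}, {A,D}, {B,C}} = 3" by (simp add: doubleton_eq_iff)
    ultimately show ?thesis by (rule three_sub[OF finS])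
  next
    assume h: "c A C + c C A > R \<and> c A D + c D A > R \<and> c B D + c D B > R"
    have "{{A,C}, {A,D}, {B,D}} \<subseteq> ?S" using h unfolding bicap_def by blast
    moreover have "card {{A,C}, {A,D}, {B,D}} = 3" by (simp add: doubleton_eq_iff)
    ultimately show ?thesis by (rule three_sub[OF finS])
  next
    assume h: "c A C + c C A > R \<and> c A D + c D A > R \<and> c C D + c D C > R"
    have "{{A,C}, {A,D}, {C,D}} \<subseteq> ?S" using h unfolding bicap_def by blast
    moreover have "card {{A,C}, {A,D}, {C,D}} = 3" by (simp add: doubleton_eq_iff)
    ultimately show ?thesis by (rule three_sub[OF finS])
  next
    assume h: "c A C + c C A > R \<and> c B C + c C B > R \<and> c B D + c D B > R"
    have "{{A,C}, {B,C}, {B,D}} \<subseteq> ?S" using h unfolding bicap_def by blast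
    moreover have "card {{A,C}, {B,C}, {B,D}} = 3" by (simp add: doubleton_eq_iff)
    ultimately show ?thesis by (rule three_sub[OF finS])
  next
    assume h: "c A C + c C A > R \<and> c B C + c C B > R \<and> c C D + c D C > R"
    have "{{A,C}, {B,C}, {C,D}} \<subseteq> ?S" using h unfolding bicap_def by blast
    moreover have "card {{A,C}, {B,C}, {C,D}} = 3" by (simp add: doubleton_eq_iff)
    ultimately show ?thesis by (rule three_sub[OF finS])
  next
    assume h: "c A C + c C A > R \<and> c B D + c D B > R \<and> c C D + c D C > R"
    have "{{A,C}, {B,D}, {C,D}} \<subseteq> ?S" using h unfolding bicap_def by blast
    moreover have "card {{A,C}, {B,D}, {C,D}} = 3" by (simp add: doubleton_eq_iff)
    ultimately show ?thesis by (rule three_sub[OF finS])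
  next
    assume h: "c A D + c D A > R \<and> c B C + c C B > R \<and> c B D + c D B > R"
    have "{{A,D}, {B,C}, {B,D}} \<subseteq> ?S" using h unfolding bicap_def by blast
    moreover have "card {{A,D}, {B,C}, {B,D}} = 3" by (simp add: doubleton_eq_iff)
    ultimately show ?thesis by (rule three_sub[OF finS])
  next
    assume h: "c A D + c D A > R \<and> c B C + c C B > R \<and> c C D + c D C > R"
    have "{{A,D}, {B,C}, {C,D}} \<subseteq> ?S" using h unfolding bicap_def by blast
    moreover have "card {{A,D}, {B,C}, {C,D}} = 3" by (simp add: doubleton_eq_iff)
    ultimately show ?thesis by (rule three_sub[OF finS])
  next
    assume h: "c A D + c D A > R \<and> c B D + c D B > R \<and> c C D + c D C > R"
    have "{{A,D}, {B,D}, {C,D}} \<subseteq> ?S" using h unfolding bicap_def by blast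
    moreover have "card {{A,D}, {B,D}, {C,D}} = 3" by (simp add: doubleton_eq_iff)
    ultimately show ?thesis by (rule three_sub[OF finS])
  next
    assume h: "c B C + c C B > R \<and> c B D + c D B > R \<and> c C D + c D C > R"
    have "{{B,C}, {B,D}, {C,D}} \<subseteq> ?S" using h unfolding bicap_def by blast
    moreover have "card {{B,C}, {B,D}, {C,D}} = 3" by (simp add: doubleton_eq_iff)
    ultimately show ?thesis by (rule three_sub[OF finS])
  qed
qed

end
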